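(* If $\delta>\frac{\pi^2}{4}-1$, then $F_1^{-1}(\alpha)>F_2(\alpha;\delta)$ for every $\alpha\in(0,1)$.
   Context: Real-valued maps: for $\alpha\in[0,1]$, $\sigma^2\ge0$ (with $\sigma=\sqrt{\sigma^2}$, $\arctan(\alpha/0)=\pi/2$ for $\alpha>0$), $\psi_2(\alpha,\sigma^2;\delta)=\frac1\delta\big[\alpha^2+\sigma^2+1-\frac{4\sigma}\pi-\frac{4\alpha}\pi\arctan(\alpha/\sigma)\big]$. For $\alpha\in(0,1)$ let $F_1^{-1}(\alpha):=\alpha^2\cot^2(\pi\alpha/2)$ (the value of $\sigma^2$ for which $\alpha$ is the positive fixed point of $\alpha\mapsto\frac2\pi\arctan(\alpha/\sigma)$). For $\delta>1$ and $\alpha\in[0,1]$, $F_2(\alpha;\delta)$ denotes the unique solution $\sigma^2\in[0,\infty)$ of $\sigma^2=\psi_2(\alpha,\sigma^2;\delta)$ (existence and uniqueness are known). *)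

theory Defs
  imports "HOL-Analysis.Analysis"
begin

text \<open>arctan(alpha/sigma) with the convention arctan(alpha/0) = pi/2 for alpha > 0
  (and arctan(0/0) taken as 0; it is multiplied by alpha = 0 anyway).\<close>
definition arctan_ratio :: "real \<Rightarrow> real \<Rightarrow> real" where
  "arctan_ratio a s = (if s = 0 then (if a > 0 then pi / 2 else 0) else arctan (a / s))"

definition psi2 :: "real \<Rightarrow> real \<Rightarrow> real \<Rightarrow> real" where
  "psi2 a s2 \<delta> = (1 / \<delta>) * (a\<^sup>2 + s2 + 1 - 4 * sqrt s2 / pi
      - 4 * a / pi * arctan_ratio a (sqrt s2))"

definition F1_inv :: "real \<Rightarrow> real" where
  "F1_inv a = a\<^sup>2 * (cot (pi * a / 2))\<^sup>2"

text \<open>The unique nonnegative solution s2 of s2 = psi2 a s2 delta (for delta > 1, a in [0,1]).\<close>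
definition F2 :: "real \<Rightarrow> real \<Rightarrow> real" where
  "F2 a \<delta> = (THE s2. s2 \<ge> 0 \<and> s2 = psi2 a s2 \<delta>)"

end

theory Submission
  imports Defs
begin

lemma pi_sq_bounds: "pi^2 \<le> 10" "pi^2 > 9.5"
proof -
  have a: "pi \<le> 3.15" "3.1 \<le> pi" using pi_approx by auto
  have "pi*pi \<le> 3.15*3.15" using a by (intro mult_mono) auto
  moreover have "3.1*3.1 \<le> pi*pi" using a by (intro mult_mono) auto
  ultimately show "pi^2 \<le> 10" "pi^2 > 9.5" by (auto simp: power2_eq_square)
qed

lemma sc_lemma:
  fixes f f' :: "real \<Rightarrow> real"
  assumes "f a \<ge> 0"
    and der: "\<And>x. (f has_real_derivative f' x) (at x)"
    and sc: "\<And>x y. a < x \<Longrightarrow> x < y \<Longrightarrow> y < b \<Longrightarrow> f' x < 0 \<Longrightarrow> f' y < 0"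
    and "a < x" "x < y" "y < b" "f x < 0"
  shows "f y < 0"
proof -
  have "\<exists>z. a < z \<and> z < x \<and> f' z < 0"
  proof (rule ccontr)
    assume n: "\<not> ?thesis"
    obtain z where z: "a < z" "z < x" "f x - f a = (x - a) * f' z"
      using MVT2[of a x f f'] der \<open>a < x\<close> by blast
    have "f' z \<ge> 0" using n z by auto
    then have "f x - f a \<ge> 0" using z \<open>a < x\<close> by simp
    then show False using assms by simp
  qed
  then obtain z where z: "a < z" "z < x" "f' z < 0" by blast
  obtain w where w: "x < w" "w < y" "f y - f x = (y - x) * f' w"
    using MVT2[of x y f f'] der \<open>x < y\<close> by blast
  have "f' w < 0" using sc[of z w] z w assms by auto
  then have "(y - x) * f' w < 0" using \<open>x<y\<close> by (simp add: mult_pos_neg)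
  then show ?thesis using w assms by linarith
qed

lemma nonneg_lemma:
  fixes f f' :: "real \<Rightarrow> real"
  assumes "f a \<ge> 0" "f b \<ge> 0"
    and der: "\<And>x. (f has_real_derivative f' x) (at x)"
    and sc: "\<And>x y. a < x \<Longrightarrow> x < y \<Longrightarrow> y < b \<Longrightarrow> f' x < 0 \<Longrightarrow> f' y < 0"
    and "a < x" "x < b"
  shows "f x \<ge> 0"
proof (cases "\<exists>z. a < z \<and> z < x \<and> f' z < 0")
  case True
  then obtain z where z: "a < z" "z < x" "f' z < 0" by blast
  obtain w where w: "x < w" "w < b" "f b - f x = (b - x) * f' w"
    using MVT2[of x b f f'] der \<open>x < b\<close> by blast
  have "f' w < 0" using sc[of z w] z w assms by auto
  then have "(b - x) * f' w < 0" using \<open>x<b\<close> by (simp add: mult_pos_neg)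
  then show ?thesis using w assms by linarith
next
  case False
  obtain z where z: "a < z" "z < x" "f x - f a = (x - a) * f' z"
    using MVT2[of a x f f'] der \<open>a < x\<close> by blast
  have "f' z \<ge> 0" using False z by auto
  then have "f x - f a \<ge> 0" using z \<open>a < x\<close> by simp
  then show ?thesis using assms by simp
qed

definition "KK t = (24 - 2*pi^2) * t * cos t - (6*pi^2 - 56) * sin t"
definition "HH t = (2*pi^2 - 8) * t * cos t - ((2*pi^2 - 8) - (24 - 2*pi^2) * t^2) * sin t"
definition "GG t = (pi^2 - 8) * t^2 * (cos t)^2 + 8 * t * cos t * sin t + (4 * t^2 - pi^2) * (sin t)^2"
definition "KK' t = ((24 - 2*pi^2) - (6*pi^2 - 56)) * cos t - (24 - 2*pi^2) * t * sin t"

lemma KK_der: "(KK has_real_derivative KK' t) (at t)"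
  unfolding KK_def KK'_def
  by (auto intro!: derivative_eq_intros simp: algebra_simps)

lemma HH_der: "(HH has_real_derivative t * KK t) (at t)"
proof -
  have "(HH has_real_derivative ((2*pi^2 - 8) * (cos t + t * (- sin t))
      - ((- ((24 - 2*pi^2) * (2 * t))) * sin t + ((2*pi^2 - 8) - (24 - 2*pi^2) * t^2) * cos t))) (at t)"
    unfolding HH_def
    apply (rule derivative_eq_intros refl)+
    apply (simp add: power2_eq_square algebra_simps)
    done
  moreover have "(2*pi^2 - 8) * (cos t + t * (- sin t))
      - ((- ((24 - 2*pi^2) * (2 * t))) * sin t + ((2*pi^2 - 8) - (24 - 2*pi^2) * t^2) * cos t) = t * KK t"
    unfolding KK_def by (simp add: power2_eq_square algebra_simps)
  ultimately show ?thesis by simp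
qed

lemma GG_der: "(GG has_real_derivative cos t * HH t) (at t)"
proof -
  have "(GG has_real_derivative ((pi^2 - 8) * (2 * t * (cos t)^2 + t^2 * (2 * cos t * (- sin t)))
      + 8 * (cos t * sin t + t * ((- sin t) * sin t + cos t * cos t))
      + (8 * t * (sin t)^2 + (4 * t^2 - pi^2) * (2 * sin t * cos t)))) (at t)"
    unfolding GG_def
    apply (rule derivative_eq_intros refl)+
    apply (simp add: power2_eq_square algebra_simps)
    done
  moreover have "(pi^2 - 8) * (2 * t * (cos t)^2 + t^2 * (2 * cos t * (- sin t)))
      + 8 * (cos t * sin t + t * ((- sin t) * sin t + cos t * cos t))
      + (8 * t * (sin t)^2 + (4 * t^2 - pi^2) * (2 * sin t * cos t)) = cos t * HH t"
    unfolding HH_def by (simp add: power2_eq_square algebra_simps)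
  ultimately show ?thesis by simp
qed

lemma KK'_mono:
  assumes "0 < x" "x < y" "y < pi/2"
  shows "KK' y \<le> KK' x"
proof -
  have c: "cos y \<le> cos x" using assms by (intro cos_monotone_0_pi_le) auto
  have s: "sin x \<le> sin y" using assms by (intro sin_monotone_2pi_le) auto
  have sx: "sin x \<ge> 0" using assms by (intro sin_ge_zero) auto
  have "x * sin x \<le> y * sin y" using s sx assms by (intro mult_mono) auto
  moreover have "0 \<le> (24 - 2*pi^2) - (6*pi^2 - 56)" "0 \<le> 24 - 2*pi^2" using pi_sq_bounds by auto
  ultimately have "((24 - 2*pi^2) - (6*pi^2 - 56)) * cos y \<le> ((24 - 2*pi^2) - (6*pi^2 - 56)) * cos x"
     "(24 - 2*pi^2) * (x * sin x) \<le> (24 - 2*pi^2) * (y * sin y)" using c by (auto intro: mult_left_mono)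
  then show ?thesis unfolding KK'_def by (simp add: algebra_simps)
qed

lemma GG_nonneg:
  assumes "0 < t" "t < pi/2"
  shows "GG t \<ge> 0"
proof -
  have K0: "KK 0 \<ge> 0" by (simp add: KK_def)
  have KKsc: "KK y < 0" if "0 < x" "x < y" "y < pi/2" "KK x < 0" for x y
  proof (rule sc_lemma[where f=KK and a=0 and f'=KK' and x=x and y=y and b="pi/2"])
    show "0 \<le> KK 0" by (rule K0)
    show "(KK has_real_derivative KK' t) (at t)" for t by (rule KK_der)
    show "KK' y' < 0" if "0 < x'" "x' < y'" "y' < pi/2" "KK' x' < 0" for x' y'
      using KK'_mono[OF that(1-3)] that(4) by linarith
  qed (rule that)+
  have HHsc: "HH y < 0" if "0 < x" "x < y" "y < pi/2" "HH x < 0" for x y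
  proof (rule sc_lemma[where f=HH and a=0 and f'="\<lambda>t. t * KK t" and x=x and y=y and b="pi/2"])
    show "0 \<le> HH 0" by (simp add: HH_def)
    show "(HH has_real_derivative t * KK t) (at t)" for t by (rule HH_der)
    show "y' * KK y' < 0" if "0 < x'" "x' < y'" "y' < pi/2" "x' * KK x' < 0" for x' y'
    proof -
      have "KK x' < 0" using that(1,4) by (simp add: mult_less_0_iff)
      then have "KK y' < 0" using KKsc[OF that(1-3)] by blast
      then show ?thesis using that(1,2) by (simp add: mult_pos_neg)
    qed
  qed (rule that)+
  show ?thesis
  proof (rule nonneg_lemma[where f=GG and a=0 and b="pi/2" and f'="\<lambda>t. cos t * HH t"])
    show "0 \<le> GG 0" by (simp add: GG_def)
    show "0 \<le> GG (pi/2)" by (simp add: GG_def power2_eq_square)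
    show "(GG has_real_derivative cos t * HH t) (at t)" for t by (rule GG_der)
    show "cos y' * HH y' < 0" if "0 < x'" "x' < y'" "y' < pi/2" "cos x' * HH x' < 0" for x' y'
    proof -
      have cx: "cos x' > 0" using that by (intro cos_gt_zero_pi) auto
      have cy: "cos y' > 0" using that by (intro cos_gt_zero_pi) auto
      have "HH x' < 0" using cx that(4) by (simp add: mult_less_0_iff)
      then have "HH y' < 0" using HHsc[OF that(1-3)] by blast
      then show ?thesis using cy by (simp add: mult_pos_neg)
    qed
  qed (rule assms)+
qed

lemma G_to_h:
  assumes "0 < a" "a < 1"
  shows "(pi^2/4 - 2) * (a * cot (pi*a/2))^2 + 4 * (a * cot (pi*a/2)) / pi + a^2 - 1 \<ge> 0"
proof -
  define t where "t = pi*a/2"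
  have t: "0 < t" "t < pi/2" using assms by (auto simp: t_def)
  have sp: "sin t > 0" using t by (intro sin_gt_zero) auto
  have a: "a = 2*t/pi" by (simp add: t_def)
  define q where "q = 2 * t * cos t / (pi * sin t)"
  have aq: "a * cot (pi*a/2) = q" unfolding q_def t_def[symmetric] cot_def a by simp
  have T1: "pi^2 * (sin t)^2 * ((pi^2/4 - 2) * q^2) = (pi^2 - 8) * t^2 * (cos t)^2"
    unfolding q_def using sp by (simp add: field_simps power2_eq_square)
  have T2: "pi^2 * (sin t)^2 * (4 * q / pi) = 8 * t * cos t * sin t"
    unfolding q_def using sp by (simp add: field_simps power2_eq_square)
  have T3: "pi^2 * (sin t)^2 * (a^2 - 1) = (4 * t^2 - pi^2) * (sin t)^2"
    unfolding a by (simp add: field_simps power2_eq_square)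
  have "pi^2 * (sin t)^2 * ((pi^2/4 - 2) * q^2 + 4 * q / pi + a^2 - 1) = GG t"
    unfolding GG_def using T1 T2 T3 by (simp add: distrib_left diff_divide_distrib algebra_simps)
  moreover have "GG t \<ge> 0" using GG_nonneg[OF t] .
  moreover have "pi^2 * (sin t)^2 > 0" using sp by simp
  ultimately have "(pi^2/4 - 2) * q^2 + 4 * q / pi + a^2 - 1 \<ge> 0"
    by (metis zero_le_mult_iff not_less)
  then show ?thesis using aq by simp
qed

lemma m_der:
  assumes "x > 0"
  shows "((\<lambda>x. x + a * arctan (a / x)) has_real_derivative (x^2 / (x^2 + a^2))) (at x)"
proof -
  have "x^2 + a^2 > 0" using assms by (simp add: add_pos_nonneg)
  then show ?thesis using assms
    by (auto intro!: derivative_eq_intros simp: field_simps power2_eq_square)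
qed

lemma m_mono:
  assumes "0 < x" "x \<le> y"
  shows "x + a * arctan (a / x) \<le> y + a * arctan (a / y)"
proof (cases "x = y")
  case False
  then have "x < y" using assms by simp
  have "\<exists>z. x < z \<and> z < y \<and> (y + a * arctan (a / y)) - (x + a * arctan (a / x)) = (y - x) * (z^2 / (z^2 + a^2))"
  proof (rule MVT2[OF \<open>x < y\<close>])
    fix w assume "x \<le> w" "w \<le> y"
    then have "w > 0" using assms by linarith
    then show "((\<lambda>x. x + a * arctan (a / x)) has_real_derivative w^2 / (w^2 + a^2)) (at w)"
      by (rule m_der)
  qed
  then obtain z where z: "x < z" "z < y"
    "(y + a * arctan (a / y)) - (x + a * arctan (a / x)) = (y - x) * (z^2 / (z^2 + a^2))" by blast
  have "z^2 / (z^2 + a^2) \<ge> 0" by simp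
  then have "(y - x) * (z^2 / (z^2 + a^2)) \<ge> 0" using \<open>x<y\<close> by simp
  then show ?thesis using z by linarith
qed simp

theorem mainTheorem19:
  fixes \<delta> :: real
  assumes "\<delta> > pi\<^sup>2 / 4 - 1"
  shows "\<forall>a::real. 0 < a \<and> a < 1 \<longrightarrow> F1_inv a > F2 a \<delta>"
proof (intro allI impI)
  fix a :: real assume "0 < a \<and> a < 1"
  then have a0: "0 < a" and a1: "a < 1" by auto
  have d1: "\<delta> > 1" using assms pi_sq_bounds by auto
  define t where "t = pi*a/2"
  have t: "0 < t" "t < pi/2" using a0 a1 by (auto simp: t_def)
  have sp: "sin t > 0" using t by (intro sin_gt_zero) auto
  have cp: "cos t > 0" using t by (intro cos_gt_zero_pi) auto
  define \<sigma>1 where "\<sigma>1 = a * cot (pi*a/2)"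
  have s1: "\<sigma>1 > 0" unfolding \<sigma>1_def t_def[symmetric] cot_def using sp cp a0 by simp
  have F1: "F1_inv a = \<sigma>1^2" unfolding F1_inv_def \<sigma>1_def by (simp add: power_mult_distrib)
  have "a / \<sigma>1 = tan t" unfolding \<sigma>1_def t_def[symmetric] cot_def tan_def using a0 sp cp by simp
  then have at1: "arctan (a / \<sigma>1) = t" using t by (simp add: arctan_tan)
  define h where "h = (\<lambda>\<sigma>. (\<delta> - 1) * \<sigma>^2 - a^2 - 1 + 4 * (\<sigma> + a * arctan (a / \<sigma>)) / pi)"
  have hs1: "h \<sigma>1 > 0"
  proof -
    have "h \<sigma>1 = (\<delta> - 1) * \<sigma>1^2 + 4 * \<sigma>1 / pi + a^2 - 1"
      unfolding h_def at1 t_def by (simp add: field_simps power2_eq_square)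
    moreover have "(\<delta> - 1) * \<sigma>1^2 > (pi^2/4 - 2) * \<sigma>1^2" using assms s1 by simp
    moreover have "(pi^2/4 - 2) * \<sigma>1^2 + 4 * \<sigma>1 / pi + a^2 - 1 \<ge> 0"
      using G_to_h[OF a0 a1] by (simp add: \<sigma>1_def)
    ultimately show ?thesis by linarith
  qed
  have hmono: "h x < h y" if "0 < x" "x < y" for x y
  proof -
    have "(\<delta> - 1) * x^2 < (\<delta> - 1) * y^2" using d1 that by (simp add: power_strict_mono)
    moreover have "4 * (x + a * arctan (a / x)) / pi \<le> 4 * (y + a * arctan (a / y)) / pi"
      using m_mono[of x y a] that by (simp add: divide_right_mono)
    ultimately show ?thesis unfolding h_def by linarith
  qed
  define \<sigma>0 where "\<sigma>0 = min 1 (min \<sigma>1 ((1 - a)^2 / (2 * (\<delta> + 1))))"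
  have s0: "\<sigma>0 > 0" "\<sigma>0 \<le> 1" "\<sigma>0 \<le> \<sigma>1" "\<sigma>0 \<le> (1 - a)^2 / (2 * (\<delta> + 1))"
    using s1 a1 d1 by (auto simp: \<sigma>0_def)
  have hs0: "h \<sigma>0 < 0"
  proof -
    have "arctan (a / \<sigma>0) < pi/2" by (rule arctan_ubound)
    then have "a * arctan (a / \<sigma>0) \<le> a * (pi/2)" using a0 by simp
    then have "4 * (\<sigma>0 + a * arctan (a / \<sigma>0)) / pi \<le> 4 * \<sigma>0 / pi + 2 * a"
      by (simp add: field_simps)
    moreover have "4 * \<sigma>0 / pi \<le> 2 * \<sigma>0" using pi_ge_two s0 by (simp add: field_simps)
    moreover have "(\<delta> - 1) * \<sigma>0^2 \<le> (\<delta> - 1) * \<sigma>0"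
      using s0 d1 by (simp add: power2_eq_square mult_left_le)
    moreover have "(\<delta> + 1) * \<sigma>0 \<le> (1 - a)^2 / 2"
      using s0(4) d1 by (simp add: field_simps)
    moreover have "(1 - a)^2 > 0" using a1 by simp
    ultimately have "h \<sigma>0 \<le> (\<delta> + 1) * \<sigma>0 - (1 - a)^2" unfolding h_def
      by (simp add: algebra_simps power2_eq_square)
    then show ?thesis using \<open>(\<delta> + 1) * \<sigma>0 \<le> (1 - a)^2 / 2\<close> \<open>(1 - a)^2 > 0\<close> by linarith
  qed
  have "continuous_on {\<sigma>0..\<sigma>1} h"
    unfolding h_def using s0 by (auto intro!: continuous_intros)
  then obtain \<sigma>s where ss: "\<sigma>0 \<le> \<sigma>s" "\<sigma>s \<le> \<sigma>1" "h \<sigma>s = 0"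
    using IVT'[of h \<sigma>0 0 \<sigma>1] hs0 hs1 s0 by auto
  have ssp: "\<sigma>s > 0" using ss s0 by simp
  have ss1: "\<sigma>s < \<sigma>1" using ss hs1 by (metis less_eq_real_def less_irrefl)
  have fix_iff: "s = psi2 a s \<delta> \<longleftrightarrow> h (sqrt s) = 0" if "s > 0" for s
  proof -
    have q: "sqrt s > 0" "(sqrt s)^2 = s" using that by auto
    define E where "E = a^2 + s + 1 - 4 * sqrt s / pi - 4 * a / pi * arctan (a / sqrt s)"
    have "psi2 a s \<delta> = E / \<delta>"
      unfolding psi2_def arctan_ratio_def E_def using q by simp
    moreover have "h (sqrt s) = \<delta> * s - E"
      unfolding h_def q(2) E_def by (simp add: algebra_simps add_divide_distrib diff_divide_distrib)
    ultimately have "psi2 a s \<delta> = s - h (sqrt s) / \<delta>" using d1 by (simp add: field_simps)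
    then show ?thesis using d1 by auto
  qed
  define ssq where "ssq = \<sigma>s^2"
  have ssq_pos: "ssq > 0" using ssp by (simp add: ssq_def)
  have P: "ssq \<ge> 0 \<and> ssq = psi2 a ssq \<delta>"
    using fix_iff[OF ssq_pos] ssp ss by (simp add: ssq_def)
  have uniq: "s = ssq" if "s \<ge> 0 \<and> s = psi2 a s \<delta>" for s
  proof (cases "s = 0")
    case True
    have "psi2 a 0 \<delta> = (1/\<delta>) * (1 - a)^2"
      unfolding psi2_def arctan_ratio_def using a0 by (simp add: power2_eq_square algebra_simps)
    moreover have "(1/\<delta>) * (1 - a)^2 > 0" using a1 d1 by simp
    ultimately have "psi2 a s \<delta> > 0" using True by simp
    then show ?thesis using that True by linarith
  next
    case False
    then have sp': "s > 0" using that by simp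
    then have "h (sqrt s) = 0" using fix_iff that by blast
    moreover have "sqrt s > 0" using sp' by simp
    ultimately have "sqrt s = \<sigma>s"
      using hmono ssp ss(3) by (metis linorder_neqE_linordered_idom less_irrefl)
    then show ?thesis using sp' by (metis real_sqrt_pow2 less_imp_le ssq_def)
  qed
  have "F2 a \<delta> = ssq" unfolding F2_def
    by (rule the_equality[where P="\<lambda>s2. s2 \<ge> 0 \<and> s2 = psi2 a s2 \<delta>", OF P uniq])
  moreover have "ssq < \<sigma>1^2" unfolding ssq_def using ssp ss1 by (intro power_strict_mono) auto
  ultimately show "F1_inv a > F2 a \<delta>" using F1 by linarith
qed

end
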